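(* Let $G$ be a connected simple graph with $v$ vertices and $|E|$ edges, and let $p_1=|E|-v+1$. Then $H^{1,v-1}_{\mathcal A_2}(G)\cong\mathbb Z^{p_1}$ if $G$ is bipartite, and $H^{1,v-1}_{\mathcal A_2}(G)\cong\mathbb Z^{p_1-1}\oplus\mathbb Z_2$ if $G$ has an odd cycle.
   Context: $\mathcal A_2=\mathbb Z[x]/(x^2)$. For a finite graph $G$ with a fixed total order on its edge set $E(G)$ and $s\subseteq E(G)$, $[G:s]$ is the spanning subgraph with edge set $s$. An enhanced state is a pair $(s,c)$ where $c$ assigns to each component $C$ of $[G:s]$ an exponent $c(C)\in\{0,1\}$ (weight $x^{c(C)}$); its bidegree is $(|s|,\sum_C c(C))$. $C^{i,j}_{\mathcal A_2}(G)$ is the free abelian group on enhanced states of bidegree $(i,j)$, with differential $d=\sum_{e\notin s}(-1)^{|\{f\in s:f<e\}|}d_e$, where $d_e(s,c)$ is the enhanced state on $s\cup\{e\}$ obtained, if $e$ joins distinct components $C_1,C_2$, by giving the merged component weight $x^{c(C_1)}x^{c(C_2)}\in\mathcal A_2$ (zero if the exponent sum is $\ge2$), other weights unchanged, and, if both endpoints of $e$ lie in one component, by keeping all weights. $H^{i,j}_{\mathcal A_2}(G)$ is its cohomology. *)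

theory Defs
  imports "HOL-Algebra.Algebra"
begin

text \<open>A finite simple graph is given by a finite vertex set V and a duplicate-free list es
of edges (two-element subsets of V); the position of an edge in the list is its index and
the total order on E(G) is the order of indices. Spanning subgraphs [G:s] are given by
sets s of edge indices.\<close>

definition simple_graph :: "'v set \<Rightarrow> 'v set list \<Rightarrow> bool" where
  "simple_graph V es \<longleftrightarrow> finite V \<and> distinct es \<and> (\<forall>e\<in>set es. e \<subseteq> V \<and> card e = 2)"

definition adj :: "'v set list \<Rightarrow> nat set \<Rightarrow> 'v \<Rightarrow> 'v \<Rightarrow> bool" where
  "adj es s a b \<longleftrightarrow> (\<exists>k\<in>s. k < length es \<and> es ! k = {a, b})"

definition reach :: "'v set list \<Rightarrow> nat set \<Rightarrow> 'v \<Rightarrow> 'v \<Rightarrow> bool" where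
  "reach es s = (adj es s)\<^sup>*\<^sup>*"

definition comp :: "'v set \<Rightarrow> 'v set list \<Rightarrow> nat set \<Rightarrow> 'v \<Rightarrow> 'v set" where
  "comp V es s x = {y \<in> V. reach es s x y}"

definition comps :: "'v set \<Rightarrow> 'v set list \<Rightarrow> nat set \<Rightarrow> 'v set set" where
  "comps V es s = comp V es s ` V"

text \<open>An enhanced state (s, c) is encoded as (s, W) where W is the set of components
C with c(C) = 1 (weight x); the others have weight 1. Its bidegree is (|s|, |W|).\<close>
type_synonym 'v estate = "nat set \<times> 'v set set"

definition states :: "'v set \<Rightarrow> 'v set list \<Rightarrow> nat \<Rightarrow> nat \<Rightarrow> 'v estate set" where
  "states V es i j = {st. fst st \<subseteq> {..<length es} \<and> snd st \<subseteq> comps V es (fst st)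
      \<and> card (fst st) = i \<and> card (snd st) = j}"

text \<open>The partial differential d_k; None encodes the zero element.\<close>
definition dpart :: "'v set \<Rightarrow> 'v set list \<Rightarrow> nat \<Rightarrow> 'v estate \<Rightarrow> 'v estate option" where
  "dpart V es k st = (case st of (s, W) \<Rightarrow>
     (let T = {C \<in> comps V es s. C \<inter> (es ! k) \<noteq> {}} in
      if card T = 2 then
        (if T \<subseteq> W then None
         else Some (insert k s, (W - T) \<union> (if T \<inter> W \<noteq> {} then {\<Union>T} else {})))
      else Some (insert k s, W)))"

definition dsign :: "nat set \<Rightarrow> nat \<Rightarrow> int" where
  "dsign s k = (-1) ^ card {f \<in> s. f < k}"

definition dcoef :: "'v set \<Rightarrow> 'v set list \<Rightarrow> 'v estate \<Rightarrow> 'v estate \<Rightarrow> int" where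
  "dcoef V es \<sigma> \<tau> = (\<Sum>k\<in>{k. k < length es \<and> k \<notin> fst \<sigma>}.
                         if dpart V es k \<sigma> = Some \<tau> then dsign (fst \<sigma>) k else 0)"

definition chains :: "'v set \<Rightarrow> 'v set list \<Rightarrow> nat \<Rightarrow> nat \<Rightarrow> ('v estate \<Rightarrow> int) set" where
  "chains V es i j = {f. \<forall>\<sigma>. \<sigma> \<notin> states V es i j \<longrightarrow> f \<sigma> = 0}"

definition dif :: "'v set \<Rightarrow> 'v set list \<Rightarrow> nat \<Rightarrow> nat \<Rightarrow> ('v estate \<Rightarrow> int) \<Rightarrow> ('v estate \<Rightarrow> int)" where
  "dif V es i j f = (\<lambda>\<tau>. \<Sum>\<sigma>\<in>states V es i j. f \<sigma> * dcoef V es \<sigma> \<tau>)"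

definition cocycles :: "'v set \<Rightarrow> 'v set list \<Rightarrow> nat \<Rightarrow> nat \<Rightarrow> ('v estate \<Rightarrow> int) set" where
  "cocycles V es i j = {f \<in> chains V es i j. dif V es i j f = (\<lambda>_. 0)}"

definition coboundaries :: "'v set \<Rightarrow> 'v set list \<Rightarrow> nat \<Rightarrow> nat \<Rightarrow> ('v estate \<Rightarrow> int) set" where
  "coboundaries V es i j =
     (if i = 0 then {\<lambda>_. 0} else dif V es (i - 1) j ` chains V es (i - 1) j)"

definition cocycle_group :: "'v set \<Rightarrow> 'v set list \<Rightarrow> nat \<Rightarrow> nat \<Rightarrow> ('v estate \<Rightarrow> int) monoid" where
  "cocycle_group V es i j =
     \<lparr>carrier = cocycles V es i j, monoid.mult = (\<lambda>f g \<sigma>. f \<sigma> + g \<sigma>), one = (\<lambda>_. 0)\<rparr>"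

definition homology :: "'v set \<Rightarrow> 'v set list \<Rightarrow> nat \<Rightarrow> nat \<Rightarrow> ('v estate \<Rightarrow> int) set monoid" where
  "homology V es i j = cocycle_group V es i j Mod coboundaries V es i j"

definition connected_graph :: "'v set \<Rightarrow> 'v set list \<Rightarrow> bool" where
  "connected_graph V es \<longleftrightarrow> V \<noteq> {} \<and> (\<forall>x\<in>V. \<forall>y\<in>V. reach es {..<length es} x y)"

definition bipartite :: "'v set \<Rightarrow> 'v set list \<Rightarrow> bool" where
  "bipartite V es \<longleftrightarrow> (\<exists>A \<subseteq> V. \<forall>e\<in>set es. card (e \<inter> A) = 1)"

definition has_odd_cycle :: "'v set \<Rightarrow> 'v set list \<Rightarrow> bool" where
  "has_odd_cycle V es \<longleftrightarrow> (\<exists>cs. distinct cs \<and> set cs \<subseteq> V \<and> length cs \<ge> 3 \<and> odd (length cs) \<and>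
      (\<forall>i < length cs. {cs ! i, cs ! ((i + 1) mod length cs)} \<in> set es))"

definition Zpow :: "nat \<Rightarrow> (nat \<Rightarrow> int) monoid" where
  "Zpow p = sum_group {..<p} (\<lambda>_. integer_group)"

end

theory Submission imports Defs begin

locale gr =
  fixes V :: "'v set" and es :: "'v set list"
  assumes sg: "simple_graph V es" and cn: "connected_graph V es"
begin

lemma V_ne: "V \<noteq> {}" using cn by (simp add: connected_graph_def)
lemma finV: "finite V" using sg by (simp add: simple_graph_def)
lemma dist_es: "distinct es" using sg by (simp add: simple_graph_def)

lemma ed: assumes "k < length es"
  obtains a b where "a \<noteq> b" "es ! k = {a, b}" "a \<in> V" "b \<in> V"
proof -
  have "es ! k \<in> set es" using assms by simp
  then have "es ! k \<subseteq> V" "card (es ! k) = 2" using sg by (auto simp: simple_graph_def)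
  then show ?thesis using that by (auto simp: card_2_iff)
qed

lemma ed_sub: "k < length es \<Longrightarrow> es ! k \<subseteq> V"
  by (metis ed insert_subset empty_subsetI)

lemma ed_card: "k < length es \<Longrightarrow> card (es ! k) = 2"
  by (metis ed card_2_iff)

lemma reach0: "reach es {} x y \<longleftrightarrow> x = y"
proof -
  have "adj es {} = (\<lambda>_ _. False)" by (auto simp: adj_def fun_eq_iff)
  moreover have "(\<lambda>_ _. False)\<^sup>*\<^sup>* x y \<Longrightarrow> x = y" 
    by (induction rule: rtranclp_induct) auto
  ultimately show ?thesis by (auto simp: reach_def)
qed

lemma adj1: "k < length es \<Longrightarrow> adj es {k} x y \<longleftrightarrow> es ! k = {x, y}"
  by (auto simp: adj_def)

lemma reach1: assumes k: "k < length es"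
  shows "reach es {k} x y \<longleftrightarrow> x = y \<or> es ! k = {x, y}"
proof
  assume "reach es {k} x y"
  then have "(adj es {k})\<^sup>*\<^sup>* x y" by (simp add: reach_def)
  then show "x = y \<or> es ! k = {x, y}"
  proof (induction rule: rtranclp_induct)
    case base then show ?case by simp
  next
    case (step y z)
    then have yz: "es ! k = {y, z}" using adj1[OF k] by simp
    from step.IH show ?case
    proof
      assume "x = y" then show ?thesis using yz by simp
    next
      assume xy: "es ! k = {x, y}"
      obtain a b where "a \<noteq> b" "es ! k = {a, b}" using ed[OF k] by blast
      then have "x = z" using xy yz by (auto simp: doubleton_eq_iff)
      then show ?thesis by simp
    qed
  qed
next
  assume "x = y \<or> es ! k = {x, y}"
  then show "reach es {k} x y"
    unfolding reach_def using adj1[OF k] by (metis r_into_rtranclp rtranclp.rtrancl_refl)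
qed

lemma comps0: "comps V es {} = (\<lambda>x. {x}) ` V"
  unfolding comps_def comp_def reach0 by auto

lemma comp1: assumes k: "k < length es" and x: "x \<in> V"
  shows "comp V es {k} x = (if x \<in> es ! k then es ! k else {x})"
proof -
  obtain a b where ab: "a \<noteq> b" "es ! k = {a, b}" "a \<in> V" "b \<in> V" using ed[OF k] by blast
  show ?thesis unfolding comp_def reach1[OF k] using ab x by (auto simp: doubleton_eq_iff)
qed

lemma comps1: assumes k: "k < length es"
  shows "comps V es {k} = insert (es ! k) ((\<lambda>x. {x}) ` (V - es ! k))"
proof -
  obtain a b where ab: "a \<noteq> b" "es ! k = {a, b}" "a \<in> V" "b \<in> V" using ed[OF k] by blast
  show ?thesis unfolding comps_def using comp1[OF k] ab by (auto simp: image_def)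
qed

lemma card_comps1: assumes k: "k < length es"
  shows "card (comps V es {k}) = card V - 1"
proof -
  obtain a b where ab: "a \<noteq> b" "es ! k = {a, b}" "a \<in> V" "b \<in> V" using ed[OF k] by blast
  have "es ! k \<notin> (\<lambda>x. {x}) ` (V - es ! k)" using ab by auto
  moreover have "card ((\<lambda>x. {x}) ` (V - es ! k)) = card V - 2"
    using ab finV by (simp add: card_image card_Diff_subset)
  moreover have "card V \<ge> 2" using ab finV
    by (metis card_2_iff card_mono empty_subsetI insert_subset)
  ultimately show ?thesis unfolding comps1[OF k] using finV by simp
qed


definition "tau k = ({k}, comps V es {k})"
definition "sig u = ({}::nat set, (\<lambda>x. {x}) ` (V - {u}))"

lemma inj_tau: "inj tau" by (auto simp: inj_def tau_def)

lemma inj_sig: "inj_on sig V" by (auto simp: inj_on_def sig_def image_def)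

lemma states1: "states V es 1 (card V - 1) = tau ` {..<length es}"
proof (intro equalityI subsetI)
  fix st assume "st \<in> states V es 1 (card V - 1)"
  moreover obtain s W where "st = (s, W)" by (cases st)
  ultimately have st: "st = (s, W)" "s \<subseteq> {..<length es}" "W \<subseteq> comps V es s"
    "card s = 1" "card W = card V - 1" by (auto simp: states_def)
  then obtain k where k: "s = {k}" "k < length es" by (auto simp: card_1_singleton_iff)
  have "finite (comps V es {k})" using finV by (simp add: comps_def)
  then have "W = comps V es {k}" using st k card_comps1[OF k(2)] by (metis card_subset_eq)
  then show "st \<in> tau ` {..<length es}" using st k by (auto simp: tau_def)
next
  fix st assume "st \<in> tau ` {..<length es}"
  then show "st \<in> states V es 1 (card V - 1)" using card_comps1
    by (auto simp: tau_def states_def)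
qed

lemma states0: "states V es 0 (card V - 1) = sig ` V"
proof (intro equalityI subsetI)
  fix st assume "st \<in> states V es 0 (card V - 1)"
  moreover obtain s W where "st = (s, W)" by (cases st)
  ultimately have st: "st = (s, W)" "W \<subseteq> (\<lambda>x. {x}) ` V"
    "s = {}" "card W = card V - 1" using finV by (auto simp: states_def comps0 finite_subset)
  have cs: "card ((\<lambda>x. {x}) ` V) = card V" by (simp add: card_image)
  have fin: "finite ((\<lambda>x. {x}) ` V)" using finV by simp
  have "card ((\<lambda>x. {x}) ` V - W) = 1"
    using st cs fin V_ne finV by (simp add: card_Diff_subset finite_subset card_gt_0_iff Suc_leI)
  then obtain C where C: "(\<lambda>x. {x}) ` V - W = {C}" by (auto simp: card_1_singleton_iff)
  then have "C \<in> (\<lambda>x. {x}) ` V" by blast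
  then obtain u where u: "u \<in> V" "C = {u}" by auto
  have "W = (\<lambda>x. {x}) ` V - {{u}}" using C u st(2) by auto
  also have "\<dots> = (\<lambda>x. {x}) ` (V - {u})" by auto
  finally have "W = (\<lambda>x. {x}) ` (V - {u})" .
  then show "st \<in> sig ` V" using st u by (auto simp: sig_def)
next
  fix st assume "st \<in> sig ` V"
  then obtain u where u: "u \<in> V" "st = sig u" by auto
  have "card ((\<lambda>x. {x}) ` (V - {u})) = card V - 1" using u finV by (simp add: card_image)
  then show "st \<in> states V es 0 (card V - 1)" using u
    by (auto simp: sig_def states_def comps0)
qed


lemma dpart_sig: assumes k: "k < length es" and u: "u \<in> V"
  shows "dpart V es k (sig u) = (if u \<in> es ! k then Some (tau k) else None)"
proof -
  obtain a b where ab: "a \<noteq> b" "es ! k = {a, b}" "a \<in> V" "b \<in> V" using ed[OF k] by blast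
  define T where "T = {C \<in> comps V es {}. C \<inter> es ! k \<noteq> {}}"
  have T: "T = {{a}, {b}}" unfolding T_def comps0 using ab by auto
  have cT: "card T = 2" using T ab by simp
  show ?thesis
  proof (cases "u \<in> es ! k")
    case False
    then have "T \<subseteq> (\<lambda>x. {x}) ` (V - {u})" using T ab by auto
    then show ?thesis using False cT unfolding dpart_def sig_def Let_def by (simp add: T_def[symmetric])
  next
    case True
    then have nsub: "\<not> T \<subseteq> (\<lambda>x. {x}) ` (V - {u})" using T ab by auto
    have ne: "T \<inter> (\<lambda>x. {x}) ` (V - {u}) \<noteq> {}" using T ab True by auto
    have UT: "\<Union>T = es ! k" using T ab by auto
    have "(\<lambda>x. {x}) ` (V - {u}) - T \<union> {es ! k} = comps V es {k}"
      unfolding comps1[OF k] using T ab True by auto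
    then show ?thesis using True cT nsub ne UT
      unfolding dpart_def sig_def Let_def tau_def by (simp add: T_def[symmetric])
  qed
qed

lemma dsign_empty[simp]: "dsign {} k = 1" by (simp add: dsign_def)

lemma dcoef_sig: assumes u: "u \<in> V"
  shows "dcoef V es (sig u) t = (\<Sum>k<length es. if u \<in> es ! k \<and> t = tau k then 1 else 0)"
  unfolding dcoef_def
  by (rule sum.cong) (auto simp: sig_def[of u] dpart_sig[OF _ u, unfolded sig_def])

lemma dcoef_sig_tau: assumes u: "u \<in> V" and j: "j < length es"
  shows "dcoef V es (sig u) (tau j) = (if u \<in> es ! j then 1 else 0)"
proof -
  have "dcoef V es (sig u) (tau j) = (\<Sum>k<length es. if k = j then (if u \<in> es ! j then 1 else 0) else 0)"
    unfolding dcoef_sig[OF u] by (rule sum.cong) (auto simp: inj_tau inj_eq)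
  also have "\<dots> = (if u \<in> es ! j then 1 else 0)" using j by simp
  finally show ?thesis .
qed

lemma dcoef_sig_other: assumes u: "u \<in> V" and t: "t \<notin> tau ` {..<length es}"
  shows "dcoef V es (sig u) t = 0"
  unfolding dcoef_sig[OF u] using t by (intro sum.neutral) auto

abbreviation "n1 \<equiv> card V - 1"

lemma dif0: "dif V es 0 n1 g t = (\<Sum>u\<in>V. g (sig u) * dcoef V es (sig u) t)"
  unfolding dif_def states0 by (simp add: sum.reindex[OF inj_sig])

lemma dif0_tau: assumes j: "j < length es"
  shows "dif V es 0 n1 g (tau j) = (\<Sum>u\<in>es ! j. g (sig u))"
proof -
  have "dif V es 0 n1 g (tau j) = (\<Sum>u\<in>V. if u \<in> es ! j then g (sig u) else 0)"
    unfolding dif0 by (rule sum.cong) (auto simp: dcoef_sig_tau[OF _ j])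
  also have "\<dots> = (\<Sum>u\<in>es ! j. g (sig u))"
    using ed_sub[OF j] finV by (simp add: sum.If_cases Int_absorb1)
  finally show ?thesis .
qed

lemma dif0_other: assumes t: "t \<notin> tau ` {..<length es}"
  shows "dif V es 0 n1 g t = 0"
  unfolding dif0 by (rule sum.neutral) (simp add: dcoef_sig_other[OF _ t])

lemma dpart_tau: assumes k: "k < length es" and j: "j < length es" and kj: "k \<noteq> j"
  shows "dpart V es k (tau j) = None"
proof -
  obtain a b where ab: "a \<noteq> b" "es ! k = {a, b}" "a \<in> V" "b \<in> V" using ed[OF k] by blast
  obtain c d where cd: "c \<noteq> d" "es ! j = {c, d}" "c \<in> V" "d \<in> V" using ed[OF j] by blast
  have neq: "es ! k \<noteq> es ! j" using dist_es k j kj by (simp add: nth_eq_iff_index_eq)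
  define T where "T = {C \<in> comps V es {j}. C \<inter> es ! k \<noteq> {}}"
  have sub: "T \<subseteq> comps V es {j}" by (auto simp: T_def)
  have "card T = 2"
  proof (cases "a \<in> es ! j")
    case True
    then have "b \<notin> es ! j" using neq ab cd by auto
    then have "T = {es ! j, {b}}" unfolding T_def comps1[OF j] using ab True by auto
    then show ?thesis using cd by (auto simp: card_insert_if)
  next
    case False
    show ?thesis
    proof (cases "b \<in> es ! j")
      case True
      then have "T = {es ! j, {a}}" unfolding T_def comps1[OF j] using ab False by auto
      then show ?thesis using cd by (auto simp: card_insert_if)
    next
      case F2: False
      then have "T = {{a}, {b}}" unfolding T_def comps1[OF j] using ab False cd by auto
      then show ?thesis using ab by auto
    qed
  qed
  then show ?thesis using sub unfolding dpart_def tau_def T_def by simp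
qed

lemma dcoef_tau: assumes j: "j < length es"
  shows "dcoef V es (tau j) t = 0"
  unfolding dcoef_def tau_def[of j] by (rule sum.neutral) (auto simp: dpart_tau[OF _ j, unfolded tau_def])

lemma dif1: "dif V es 1 n1 f = (\<lambda>_. 0)"
  unfolding dif_def states1 by (auto simp: dcoef_tau fun_eq_iff intro!: sum.neutral)

lemma cocycles1: "cocycles V es 1 n1 = chains V es 1 n1"
  unfolding cocycles_def using dif1 by auto


definition "r = (SOME r. r \<in> V)"
lemma rV: "r \<in> V" unfolding r_def using V_ne by (simp add: some_in_eq)

abbreviation "adjE \<equiv> adj es {..<length es}"

definition "dst u = (LEAST n. (adjE ^^ n) r u)"

lemma dst_ex: assumes "u \<in> V" shows "(adjE ^^ dst u) r u"
proof -
  have "reach es {..<length es} r u" using cn rV assms by (simp add: connected_graph_def)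
  then have "\<exists>n. (adjE ^^ n) r u" by (simp add: reach_def rtranclp_power)
  then show ?thesis unfolding dst_def by (rule LeastI_ex)
qed

lemma dst_le: "(adjE ^^ n) r u \<Longrightarrow> dst u \<le> n"
  unfolding dst_def by (rule Least_le)

lemma dst_r: "dst r = 0" using dst_le[of 0 r] by simp

lemma dist0: assumes "u \<in> V" shows "dst u = 0 \<longleftrightarrow> u = r"
  using dst_ex[OF assms] dst_r by auto

lemma parent_ex: assumes u: "u \<in> V" "u \<noteq> r"
  shows "\<exists>k w. k < length es \<and> es ! k = {u, w} \<and> w \<in> V \<and> Suc (dst w) = dst u"
proof -
  obtain m where m: "dst u = Suc m" using dist0[OF u(1)] u(2) by (cases "dst u") auto
  have "(adjE ^^ Suc m) r u" using dst_ex[OF u(1)] m by simp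
  then obtain w where w: "(adjE ^^ m) r w" "adjE w u" by (rule relpowp_Suc_E)
  obtain k where k: "k < length es" "es ! k = {w, u}" using w(2) by (auto simp: adj_def)
  have wV: "w \<in> V" using ed_sub[OF k(1)] k(2) by auto
  have "dst w \<le> m" using dst_le[OF w(1)] .
  moreover have "(adjE ^^ Suc (dst w)) r u"
    using relpowp_Suc_I[OF dst_ex[OF wV] w(2)] .
  then have "dst u \<le> Suc (dst w)" by (rule dst_le)
  ultimately have "Suc (dst w) = dst u" using m by simp
  then show ?thesis using k wV by (auto simp: insert_commute)
qed

definition "pw u = (SOME (k, w). k < length es \<and> es ! k = {u, w} \<and> w \<in> V \<and> Suc (dst w) = dst u)"
definition "pe u = fst (pw u)"
definition "par u = snd (pw u)"

lemma par: assumes "u \<in> V" "u \<noteq> r"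
  shows "pe u < length es" "es ! pe u = {u, par u}" "par u \<in> V" "Suc (dst (par u)) = dst u"
proof -
  have "\<exists>p. (\<lambda>(k, w). k < length es \<and> es ! k = {u, w} \<and> w \<in> V \<and> Suc (dst w) = dst u) p"
    using parent_ex[OF assms] by auto
  then have "(\<lambda>(k, w). k < length es \<and> es ! k = {u, w} \<and> w \<in> V \<and> Suc (dst w) = dst u) (pw u)"
    unfolding pw_def by (rule someI_ex)
  then show "pe u < length es" "es ! pe u = {u, par u}" "par u \<in> V" "Suc (dst (par u)) = dst u"
    by (auto simp: pe_def par_def split: prod.splits)
qed

lemma par_neq: "u \<in> V \<Longrightarrow> u \<noteq> r \<Longrightarrow> par u \<noteq> u"
  using par(4) by fastforce

lemma dst_induct[consumes 1, case_names step]: assumes "u \<in> V"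
  and "\<And>u. u \<in> V \<Longrightarrow> (\<And>w. w \<in> V \<Longrightarrow> dst w < dst u \<Longrightarrow> P w) \<Longrightarrow> P u"
  shows "P u"
  using assms(1)
proof (induction u rule: measure_induct_rule[of dst])
  case (less x) then show ?case using assms(2) by blast
qed

primrec pot :: "(nat \<Rightarrow> int) \<Rightarrow> nat \<Rightarrow> 'v \<Rightarrow> int" where
  "pot f 0 u = 0"
| "pot f (Suc n) u = f (pe u) - pot f n (par u)"

definition "xp f u = pot f (dst u) u"

lemma xp_r: "xp f r = 0" by (simp add: xp_def dst_r)

lemma xp_step: assumes "u \<in> V" "u \<noteq> r"
  shows "xp f u = f (pe u) - xp f (par u)"
  unfolding xp_def par(4)[OF assms, symmetric] by simp

lemma pot_lin: "pot (\<lambda>k. a * f k + b * g k) n u = a * pot f n u + b * pot g n u"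
  by (induction n arbitrary: u) (auto simp: algebra_simps)

lemma xp_lin: "xp (\<lambda>k. a * f k + b * g k) u = a * xp f u + b * xp g u"
  by (simp add: xp_def pot_lin)

definition "TE = pe ` (V - {r})"
definition "NT = {..<length es} - TE"

lemma inj_pe: "inj_on pe (V - {r})"
proof (rule inj_onI)
  fix u w assume u: "u \<in> V - {r}" and w: "w \<in> V - {r}" and eq: "pe u = pe w"
  show "u = w"
  proof (rule ccontr)
    assume uw0: "u \<noteq> w"
    have e1: "es ! pe u = {u, par u}" using par(2)[of u] u by blast
    have e2: "es ! pe w = {w, par w}" using par(2)[of w] w by blast
    have eqs: "{u, par u} = {w, par w}" using e1 e2 eq by simp
    have "u \<in> {w, par w}" unfolding eqs[symmetric] by simp
    then have uw1: "u = par w" using uw0 by simp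
    have "w \<in> {u, par u}" unfolding eqs by simp
    then have uw2: "w = par u" using uw0 by simp
    have d1: "Suc (dst (par u)) = dst u" using par(4)[of u] u by blast
    have d2: "Suc (dst (par w)) = dst w" using par(4)[of w] w by blast
    have "dst u = Suc (dst w)" using d1 unfolding uw2 by simp
    moreover have "dst w = Suc (dst u)" using d2 unfolding uw1 by simp
    ultimately have False by simp
    then show False by simp
  qed
qed

lemma TE_sub: "TE \<subseteq> {..<length es}" using par(1) by (auto simp: TE_def)

lemma card_NT: "card NT = length es + 1 - card V"
proof -
  have c1: "card TE = card V - 1" unfolding TE_def card_image[OF inj_pe]
    using rV finV by (simp add: card_Diff_singleton)
  have c2: "card V \<ge> 1" using V_ne finV by (simp add: Suc_leI card_gt_0_iff)
  have fTE: "finite TE" using TE_sub finite_subset by blast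
  have c3: "card TE \<le> length es" using card_mono[OF _ TE_sub] by simp
  have "card NT = length es - card TE" unfolding NT_def
    using card_Diff_subset[OF fTE TE_sub] by simp
  then show ?thesis using c1 c2 c3 by linarith
qed

lemma finNT: "finite NT" by (simp add: NT_def)
lemma NT_lt: "e \<in> NT \<Longrightarrow> e < length es" by (auto simp: NT_def)

definition "phi e f = f e - (\<Sum>u\<in>es ! e. xp f u)"
definition "sgs e = (\<Sum>u\<in>es ! e. (-1::int) ^ dst u)"

lemma phi_lin: "phi e (\<lambda>k. a * f k + b * g k) = a * phi e f + b * phi e g"
  by (simp add: phi_def xp_lin sum.distrib sum_distrib_left algebra_simps)

lemma K1: assumes f: "\<And>k. k < length es \<Longrightarrow> f k = (\<Sum>u\<in>es ! k. y u)" and u: "u \<in> V"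
  shows "xp f u = y u - (-1) ^ dst u * y r"
  using u
proof (induction u rule: dst_induct)
  case (step u)
  show ?case
  proof (cases "u = r")
    case True then show ?thesis by (simp add: xp_r dst_r)
  next
    case False
    have p: "par u \<in> V" "dst (par u) < dst u" using par[OF step(1) False] by auto
    have "xp f u = f (pe u) - xp f (par u)" using xp_step[OF step(1) False] .
    also have "f (pe u) = y u + y (par u)"
      using f[OF par(1)[OF step(1) False]] par(2)[OF step(1) False] par_neq[OF step(1) False] by simp
    also have "xp f (par u) = y (par u) - (-1) ^ dst (par u) * y r" using step(2)[OF p] .
    finally show ?thesis using sym[OF par(4)[OF step(1) False]] by simp
  qed
qed

lemma K1phi: assumes f: "\<And>k. k < length es \<Longrightarrow> f k = (\<Sum>u\<in>es ! k. y u)" and e: "e < length es"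
  shows "phi e f = y r * sgs e"
proof -
  have "phi e f = (\<Sum>u\<in>es ! e. y u - xp f u)" unfolding phi_def f[OF e] by (simp add: sum_subtractf)
  also have "\<dots> = (\<Sum>u\<in>es ! e. (-1) ^ dst u * y r)"
    using ed_sub[OF e] by (intro sum.cong) (auto simp: K1[OF f])
  finally show ?thesis by (simp add: sgs_def sum_distrib_left algebra_simps)
qed

lemma K2: assumes f: "\<And>e. e \<in> NT \<Longrightarrow> phi e f = 0" and k: "k < length es"
  shows "f k = (\<Sum>u\<in>es ! k. xp f u)"
proof (cases "k \<in> NT")
  case True then show ?thesis using f[OF True] by (simp add: phi_def)
next
  case False
  then obtain u where u: "u \<in> V" "u \<noteq> r" "k = pe u" using k by (auto simp: NT_def TE_def)
  show ?thesis using xp_step[OF u(1,2)] par(2)[OF u(1,2)] par_neq[OF u(1,2)] u(3) by simp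
qed

lemma S0: assumes f: "\<And>k. k \<in> TE \<Longrightarrow> f k = 0" and u: "u \<in> V"
  shows "xp f u = 0"
  using u
proof (induction u rule: dst_induct)
  case (step u)
  show ?case
  proof (cases "u = r")
    case True then show ?thesis by (simp add: xp_r)
  next
    case False
    have p: "par u \<in> V" "dst (par u) < dst u" using par[OF step(1) False] by auto
    have "pe u \<in> TE" using step(1) False by (auto simp: TE_def)
    then show ?thesis using xp_step[OF step(1) False] step(2)[OF p] f by simp
  qed
qed

lemma S: assumes f: "\<And>k. k \<in> TE \<Longrightarrow> f k = 0" and e: "e < length es"
  shows "phi e f = f e"
  unfolding phi_def using S0[OF f] ed_sub[OF e] by (simp add: subset_iff)


lemma sgs_pair: assumes e: "e < length es" and ab: "es ! e = {a, b}" "a \<noteq> b"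
  shows "sgs e = (-1) ^ dst a + (-1) ^ dst b"
  unfolding sgs_def ab using ab by simp

lemma sgs_vals: assumes e: "e < length es"
  obtains a b where "es ! e = {a, b}" "a \<noteq> b" "a \<in> V" "b \<in> V"
    "sgs e = (-1) ^ dst a + (-1) ^ dst b"
  using ed[OF e] sgs_pair[OF e] by metis

lemma sgs_zero_iff: assumes e: "e < length es" and ab: "es ! e = {a, b}" "a \<noteq> b"
  shows "sgs e = 0 \<longleftrightarrow> (even (dst a) \<longleftrightarrow> odd (dst b))"
  unfolding sgs_pair[OF e ab] by (cases "even (dst a)"; cases "even (dst b)") auto

lemma sgs_TE: assumes "k \<in> TE" shows "sgs k = 0"
proof -
  obtain u where u: "u \<in> V" "u \<noteq> r" "k = pe u" using assms by (auto simp: TE_def)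
  have "even (dst u) \<longleftrightarrow> odd (dst (par u))" using sym[OF par(4)[OF u(1,2)]] by simp
  then show ?thesis using sgs_zero_iff[OF par(1)[OF u(1,2)] par(2)[OF u(1,2)] not_sym[OF par_neq[OF u(1,2)]]] u(3)
    by simp
qed

definition "sh e = sgs e div 2"

lemma sgs_2sh: assumes e: "e < length es" shows "sgs e = 2 * sh e"
proof -
  obtain a b where "sgs e = (-1) ^ dst a + (-1) ^ dst b" using sgs_vals[OF e] by metis
  then show ?thesis unfolding sh_def by (cases "even (dst a)"; cases "even (dst b)") auto
qed

lemma sh_sq: assumes e: "e < length es" and ne: "sgs e \<noteq> 0" shows "sh e * sh e = 1"
proof -
  obtain a b where "sgs e = (-1) ^ dst a + (-1) ^ dst b" using sgs_vals[OF e] by metis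
  then show ?thesis using ne unfolding sh_def by (cases "even (dst a)"; cases "even (dst b)") auto
qed

lemma card_int1: "a \<noteq> b \<Longrightarrow> card ({a, b} \<inter> A) = 1 \<longleftrightarrow> (a \<in> A \<longleftrightarrow> b \<notin> A)"
  by (cases "a \<in> A"; cases "b \<in> A") (auto simp: Int_insert_left)

lemma bip_sgs: assumes "bipartite V es" and e: "e < length es" shows "sgs e = 0"
proof -
  obtain A where A: "A \<subseteq> V" "\<And>e. e \<in> set es \<Longrightarrow> card (e \<inter> A) = 1"
    using assms by (auto simp: bipartite_def)
  have cl: "u \<in> A \<longleftrightarrow> (r \<in> A \<longleftrightarrow> even (dst u))" if "u \<in> V" for u
    using that
  proof (induction u rule: dst_induct)
    case (step u)
    show ?case
    proof (cases "u = r")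
      case True then show ?thesis by (simp add: dst_r)
    next
      case False
      have p: "par u \<in> V" "dst (par u) < dst u" using par[OF step(1) False] by auto
      have "es ! pe u \<in> set es" using par(1)[OF step(1) False] by simp
      then have "card ({u, par u} \<inter> A) = 1" using A(2) par(2)[OF step(1) False] by metis
      then have "u \<in> A \<longleftrightarrow> par u \<notin> A" using card_int1 par_neq[OF step(1) False] by metis
      then show ?thesis using step(2)[OF p] sym[OF par(4)[OF step(1) False]] by simp
    qed
  qed
  obtain a b where ab: "es ! e = {a, b}" "a \<noteq> b" "a \<in> V" "b \<in> V" using ed[OF e] by metis
  have "es ! e \<in> set es" using e by simp
  then have "card ({a, b} \<inter> A) = 1" using A(2) ab by metis
  then have "a \<in> A \<longleftrightarrow> b \<notin> A" using card_int1 ab(2) by metis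
  then have "even (dst a) \<longleftrightarrow> odd (dst b)" using cl[OF ab(3)] cl[OF ab(4)] by auto
  then show ?thesis using sgs_zero_iff[OF e ab(1,2)] by simp
qed

lemma edge_par: assumes z: "\<And>e. e < length es \<Longrightarrow> sgs e = 0"
  and xy: "{x, y} \<in> set es" "x \<noteq> y"
  shows "even (dst x) \<longleftrightarrow> odd (dst y)"
proof -
  obtain k where k: "k < length es" "es ! k = {x, y}" using xy(1) unfolding in_set_conv_nth by blast
  have "sgs k = 0" using z[OF k(1)] .
  then show ?thesis using sgs_zero_iff[OF k xy(2)] by blast
qed

lemma cyc_neq: assumes "distinct cs" "length cs \<ge> 3" "i < length cs"
  shows "cs ! i \<noteq> cs ! ((i + 1) mod length cs)"
proof -
  have l0: "0 < length cs" using assms(3) by linarith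
  have "i \<noteq> (i + 1) mod length cs"
  proof (cases "i + 1 < length cs")
    case True then show ?thesis by simp
  next
    case False
    then have e: "i + 1 = length cs" using assms(3) by simp
    then have "(i + 1) mod length cs = 0" by simp
    moreover have "i \<noteq> 0" using e assms(2) by simp
    ultimately show ?thesis by simp
  qed
  moreover have "(i + 1) mod length cs < length cs" using l0 by simp
  ultimately show ?thesis using assms(1,3) by (simp add: nth_eq_iff_index_eq)
qed

lemma cyc_par: assumes st: "\<And>i::nat. i < n \<Longrightarrow> (P (c i) \<longleftrightarrow> \<not> P (c ((i + 1) mod n)))"
  shows "(i::nat) < n \<Longrightarrow> (P (c i) \<longleftrightarrow> (P (c 0) \<longleftrightarrow> even i))"
proof (induction i)
  case 0 then show ?case by simp
next
  case (Suc i)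
  have i: "i < n" using Suc.prems by simp
  have m: "(i + 1) mod n = Suc i" using Suc.prems by simp
  have a: "P (c i) \<longleftrightarrow> \<not> P (c (Suc i))" using st[OF i] unfolding m .
  have b: "P (c i) \<longleftrightarrow> (P (c 0) \<longleftrightarrow> even i)" using Suc.IH[OF i] .
  have d: "even (Suc i) \<longleftrightarrow> \<not> even i" by simp
  from a b d show ?case by blast
qed

lemma odd_sgs: assumes "has_odd_cycle V es" shows "\<exists>e < length es. sgs e \<noteq> 0"
proof (rule ccontr)
  assume "\<not> ?thesis"
  then have z: "\<And>e. e < length es \<Longrightarrow> sgs e = 0" by auto
  obtain cs where cs0: "distinct cs \<and> set cs \<subseteq> V \<and> length cs \<ge> 3 \<and> odd (length cs) \<and>
      (\<forall>i < length cs. {cs ! i, cs ! ((i + 1) mod length cs)} \<in> set es)"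
    using assms unfolding has_odd_cycle_def by (elim exE)
  define n where "n = length cs"
  have cs: "distinct cs" "n \<ge> 3" "odd n"
    "\<And>i. i < n \<Longrightarrow> {cs ! i, cs ! ((i + 1) mod n)} \<in> set es"
    using cs0 unfolding n_def by auto
  have st: "even (dst (cs ! i)) \<longleftrightarrow> \<not> even (dst (cs ! ((i + 1) mod n)))" if "i < n" for i
    using edge_par[OF z cs(4)[OF that]] cyc_neq[OF cs(1) cs(2)[unfolded n_def] that[unfolded n_def]]
    unfolding n_def by blast
  have n1: "n - 1 < n" "(n - 1 + 1) mod n = 0" using cs(2) by auto
  have A: "even (dst (cs ! (n - 1))) \<longleftrightarrow> \<not> even (dst (cs ! 0))"
    using st[OF n1(1)] unfolding n1(2) .
  have B: "even (dst (cs ! (n - 1))) \<longleftrightarrow> (even (dst (cs ! 0)) \<longleftrightarrow> even (n - 1))"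
    using cyc_par[of n "\<lambda>v. even (dst v)" "\<lambda>i. cs ! i", OF st n1(1)] .
  have C: "even (n - 1)" using cs(2) cs(3) by simp
  from A B C show False by blast
qed


definition "F f = (\<lambda>k. if k < length es then f (tau k) else (0::int))"

definition "G1 = cocycle_group V es 1 n1"
definition "C1 = {f. \<forall>t. t \<notin> tau ` {..<length es} \<longrightarrow> f t = (0::int)}"

lemma carrier_G1: "carrier G1 = C1"
  unfolding G1_def cocycle_group_def cocycles1 chains_def states1 C1_def by simp

lemma mult_G1: "f \<otimes>\<^bsub>G1\<^esub> g = (\<lambda>t. f t + g t)" by (simp add: G1_def cocycle_group_def)
lemma one_G1: "\<one>\<^bsub>G1\<^esub> = (\<lambda>_. 0)" by (simp add: G1_def cocycle_group_def)

lemma group_G1: "group G1"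
proof (rule groupI)
  fix x y assume "x \<in> carrier G1" "y \<in> carrier G1"
  then show "x \<otimes>\<^bsub>G1\<^esub> y \<in> carrier G1" by (simp add: carrier_G1 C1_def mult_G1)
next
  show "\<one>\<^bsub>G1\<^esub> \<in> carrier G1" by (simp add: carrier_G1 C1_def one_G1)
next
  fix x y z
  show "x \<otimes>\<^bsub>G1\<^esub> y \<otimes>\<^bsub>G1\<^esub> z = x \<otimes>\<^bsub>G1\<^esub> (y \<otimes>\<^bsub>G1\<^esub> z)" by (simp add: mult_G1 add.assoc)
next
  fix x show "\<one>\<^bsub>G1\<^esub> \<otimes>\<^bsub>G1\<^esub> x = x" by (simp add: mult_G1 one_G1)
next
  fix x assume "x \<in> carrier G1"
  then have "(\<lambda>t. - x t) \<in> carrier G1 \<and> (\<lambda>t. - x t) \<otimes>\<^bsub>G1\<^esub> x = \<one>\<^bsub>G1\<^esub>"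
    by (simp add: carrier_G1 C1_def mult_G1 one_G1)
  then show "\<exists>y\<in>carrier G1. y \<otimes>\<^bsub>G1\<^esub> x = \<one>\<^bsub>G1\<^esub>" by blast
qed

lemma F_add: "F (\<lambda>t. f t + g t) = (\<lambda>k. 1 * F f k + 1 * F g k)"
  by (auto simp: F_def fun_eq_iff)

lemma phi_add: "phi e (F (\<lambda>t. f t + g t)) = phi e (F f) + phi e (F g)"
  unfolding F_add phi_lin by simp

lemma F_ex: assumes "\<And>k. k \<ge> length es \<Longrightarrow> Hf k = 0"
  shows "\<exists>f\<in>carrier G1. F f = Hf"
proof -
  define f where "f = (\<lambda>t. if t \<in> tau ` {..<length es} then Hf (inv_into UNIV tau t) else 0)"
  have "f \<in> carrier G1" by (simp add: carrier_G1 C1_def f_def)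
  moreover have "F f = Hf" using assms
    by (auto simp: F_def f_def fun_eq_iff inv_into_f_f[OF inj_tau])
  ultimately show ?thesis by blast
qed

lemma cob: "coboundaries V es 1 n1 =
   {f \<in> carrier G1. \<exists>y. \<forall>k<length es. F f k = (\<Sum>u\<in>es ! k. y u)}"
proof (intro equalityI subsetI)
  fix f assume "f \<in> coboundaries V es 1 n1"
  then obtain g where g: "g \<in> chains V es 0 n1" "f = dif V es 0 n1 g"
    by (auto simp: coboundaries_def)
  have "f \<in> carrier G1" unfolding carrier_G1 C1_def g(2) using dif0_other by blast
  moreover have "\<forall>k<length es. F f k = (\<Sum>u\<in>es ! k. g (sig u))"
  proof (intro allI impI)
    fix k assume k: "k < length es"
    have "F f k = dif V es 0 n1 g (tau k)" using k by (simp add: F_def g(2))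
    also have "\<dots> = (\<Sum>u\<in>es ! k. g (sig u))" by (rule dif0_tau[OF k])
    finally show "F f k = (\<Sum>u\<in>es ! k. g (sig u))" .
  qed
  ultimately show "f \<in> {f \<in> carrier G1. \<exists>y. \<forall>k<length es. F f k = (\<Sum>u\<in>es ! k. y u)}" by blast
next
  fix f assume "f \<in> {f \<in> carrier G1. \<exists>y. \<forall>k<length es. F f k = (\<Sum>u\<in>es ! k. y u)}"
  then obtain y where f: "f \<in> carrier G1" "\<And>k. k < length es \<Longrightarrow> F f k = (\<Sum>u\<in>es ! k. y u)" by blast
  define g where "g = (\<lambda>st. if st \<in> sig ` V then y (inv_into V sig st) else 0)"
  have g0: "g \<in> chains V es 0 n1" unfolding chains_def states0 g_def by simp
  have "dif V es 0 n1 g = f"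
  proof
    fix t show "dif V es 0 n1 g t = f t"
    proof (cases "t \<in> tau ` {..<length es}")
      case True
      then obtain k where k: "k < length es" "t = tau k" by auto
      have gs: "g (sig u) = y u" if "u \<in> V" for u
        using that by (simp add: g_def inv_into_f_f[OF inj_sig])
      have "dif V es 0 n1 g t = (\<Sum>u\<in>es ! k. g (sig u))" using dif0_tau[OF k(1)] k(2) by simp
      also have "\<dots> = (\<Sum>u\<in>es ! k. y u)"
        using ed_sub[OF k(1)] gs by (intro sum.cong) auto
      also have "\<dots> = f t" using f(2)[OF k(1)] k by (simp add: F_def)
      finally show ?thesis .
    next
      case False
      have "f t = 0" using f(1) False unfolding carrier_G1 C1_def by blast
      then show ?thesis using dif0_other[OF False] by simp
    qed
  qed
  then show "f \<in> coboundaries V es 1 n1" using g0 by (auto simp: coboundaries_def)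
qed

lemma main_iso:
  assumes H: "group H" and hom: "Psi \<in> hom G1 H" and onto: "Psi ` carrier G1 = carrier H"
    and ker: "\<And>f. f \<in> carrier G1 \<Longrightarrow>
       Psi f = \<one>\<^bsub>H\<^esub> \<longleftrightarrow> (\<exists>y. \<forall>k<length es. F f k = (\<Sum>u\<in>es ! k. y u))"
  shows "homology V es 1 n1 \<cong> H"
proof -
  interpret gh: group_hom G1 H Psi
    using group_G1 H hom by (simp add: group_hom_def group_hom_axioms_def)
  have "kernel G1 H Psi = coboundaries V es 1 n1"
    unfolding cob kernel_def using ker by blast
  then show ?thesis using gh.FactGroup_iso[OF onto] by (simp add: homology_def G1_def)
qed

lemma carrier_Zpow: "carrier (Zpow N) = (\<Pi>\<^sub>E i\<in>{..<N}. UNIV)"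
  by (auto simp: Zpow_def carrier_sum_group)

lemma group_Zpow: "group (Zpow N)" by (simp add: Zpow_def)
lemma mult_Zpow: "x \<otimes>\<^bsub>Zpow N\<^esub> y = (\<lambda>i\<in>{..<N}. x i + y i)" by (simp add: Zpow_def)
lemma one_Zpow: "\<one>\<^bsub>Zpow N\<^esub> = (\<lambda>i\<in>{..<N}. 0)" by (simp add: Zpow_def)

lemma bip_iso: assumes z: "\<And>e. e < length es \<Longrightarrow> sgs e = 0"
  shows "homology V es 1 n1 \<cong> Zpow (card NT)"
proof -
  define N where "N = card NT"
  obtain en where en: "bij_betw en {..<N} NT"
    using ex_bij_betw_nat_finite[OF finNT] unfolding N_def by (metis lessThan_atLeast0)
  have enNT: "en i \<in> NT" if "i < N" for i using bij_betwE[OF en] that by blast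
  define Psi where "Psi f = (\<lambda>i\<in>{..<N}. phi (en i) (F f))" for f
  have Psi_app: "Psi f i = phi (en i) (F f)" if "i < N" for f i using that by (simp add: Psi_def)
  have hom: "Psi \<in> hom G1 (Zpow N)"
  proof (rule homI)
    fix x show "Psi x \<in> carrier (Zpow N)" unfolding carrier_Zpow Psi_def by simp
  next
    fix x y
    show "Psi (x \<otimes>\<^bsub>G1\<^esub> y) = Psi x \<otimes>\<^bsub>Zpow N\<^esub> Psi y"
      unfolding mult_Zpow mult_G1 Psi_def by (intro restrict_ext) (simp add: phi_add)
  qed
  have onto: "Psi ` carrier G1 = carrier (Zpow N)"
  proof (intro equalityI subsetI)
    fix h assume "h \<in> Psi ` carrier G1" then show "h \<in> carrier (Zpow N)"
      using hom by (auto simp: hom_def)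
  next
    fix h assume h: "h \<in> carrier (Zpow N)"
    define Hf where "Hf k = (if k \<in> NT then h (inv_into {..<N} en k) else 0)" for k
    have Hz: "Hf k = 0" if "k \<ge> length es" for k
      using NT_lt[of k] that unfolding Hf_def by auto
    obtain f where f: "f \<in> carrier G1" "F f = Hf" using F_ex[of Hf] Hz by blast
    have "Psi f = h"
    proof
      fix i show "Psi f i = h i"
      proof (cases "i < N")
        case True
        have eNT: "en i \<in> NT" using enNT[OF True] .
        have "phi (en i) Hf = Hf (en i)"
        proof (rule S)
          fix k assume "k \<in> TE" then show "Hf k = 0" unfolding Hf_def NT_def by simp
        next
          show "en i < length es" using NT_lt[OF eNT] .
        qed
        also have "\<dots> = h (inv_into {..<N} en (en i))" using eNT unfolding Hf_def by simp
        also have "\<dots> = h i" using en True by (simp add: bij_betw_def inv_into_f_f)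
        finally show ?thesis using True f(2) by (simp add: Psi_app)
      next
        case False
        then have "h i = undefined" using h unfolding carrier_Zpow by (auto simp: PiE_def extensional_def)
        then show ?thesis using False by (simp add: Psi_def)
      qed
    qed
    then show "h \<in> Psi ` carrier G1" using f(1) by blast
  qed
  have ker: "Psi f = \<one>\<^bsub>Zpow N\<^esub> \<longleftrightarrow> (\<exists>y. \<forall>k<length es. F f k = (\<Sum>u\<in>es ! k. y u))" for f
  proof
    assume eq: "Psi f = \<one>\<^bsub>Zpow N\<^esub>"
    have ph: "phi (en i) (F f) = 0" if "i < N" for i
    proof -
      have "Psi f i = 0" using eq that unfolding one_Zpow by simp
      then show ?thesis using Psi_app[OF that] by simp
    qed
    have nt: "phi e (F f) = 0" if "e \<in> NT" for e
    proof -
      have "e \<in> en ` {..<N}" using that en by (simp add: bij_betw_def)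
      then obtain i where "i < N" "e = en i" by blast
      then show ?thesis using ph by simp
    qed
    have "\<forall>k<length es. F f k = (\<Sum>u\<in>es ! k. xp (F f) u)"
      using K2[of "F f", OF nt] by blast
    then show "\<exists>y. \<forall>k<length es. F f k = (\<Sum>u\<in>es ! k. y u)" by blast
  next
    assume "\<exists>y. \<forall>k<length es. F f k = (\<Sum>u\<in>es ! k. y u)"
    then obtain y where y: "\<And>k. k < length es \<Longrightarrow> F f k = (\<Sum>u\<in>es ! k. y u)" by blast
    have ph: "phi e (F f) = 0" if "e \<in> NT" for e
      using K1phi[OF y NT_lt[OF that]] z[OF NT_lt[OF that]] by simp
    show "Psi f = \<one>\<^bsub>Zpow N\<^esub>"
      unfolding one_Zpow Psi_def by (intro restrict_ext) (simp add: ph enNT)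
  qed
  show ?thesis using main_iso[OF group_Zpow hom onto ker] unfolding N_def .
qed

lemma odd_iso: assumes e0: "e0 \<in> NT" "sgs e0 \<noteq> 0"
  shows "homology V es 1 n1 \<cong> Zpow (card NT - 1) \<times>\<times> integer_mod_group 2"
proof -
  define NT' where "NT' = NT - {e0}"
  define N where "N = card NT - 1"
  have finNT': "finite NT'" using finNT by (simp add: NT'_def)
  have cN: "card NT' = N" unfolding NT'_def N_def using finNT e0(1) by (simp add: card_Diff_singleton)
  obtain en where en: "bij_betw en {..<N} NT'"
    using ex_bij_betw_nat_finite[OF finNT'] unfolding cN by (metis lessThan_atLeast0)
  have enNT: "en i \<in> NT'" if "i < N" for i using bij_betwE[OF en] that by blast
  have e0E: "e0 < length es" using NT_lt[OF e0(1)] .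
  have s0: "sh e0 * sh e0 = 1" using sh_sq[OF e0E e0(2)] .
  define A where "A f = (\<lambda>i\<in>{..<N}. phi (en i) (F f) - sh (en i) * sh e0 * phi e0 (F f))" for f
  define B where "B f = phi e0 (F f) mod 2" for f
  define Psi where "Psi f = (A f, B f)" for f
  define TG where "TG = Zpow N \<times>\<times> integer_mod_group 2"
  have gTG: "group TG" unfolding TG_def by (intro DirProd_group group_Zpow group_integer_mod_group)
  have A_app: "A f i = phi (en i) (F f) - sh (en i) * sh e0 * phi e0 (F f)" if "i < N" for f i
    using that by (simp add: A_def)
  have hom: "Psi \<in> hom G1 TG"
  proof (rule homI)
    fix x show "Psi x \<in> carrier TG"
      unfolding TG_def Psi_def carrier_DirProd carrier_Zpow carrier_integer_mod_group
      by (simp add: A_def B_def)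
  next
    fix x y
    have a: "A (x \<otimes>\<^bsub>G1\<^esub> y) = A x \<otimes>\<^bsub>Zpow N\<^esub> A y"
      unfolding mult_Zpow mult_G1 A_def by (intro restrict_ext) (simp add: phi_add algebra_simps)
    have b: "B (x \<otimes>\<^bsub>G1\<^esub> y) = (B x + B y) mod int 2"
      unfolding mult_G1 B_def phi_add by (simp add: mod_add_eq)
    show "Psi (x \<otimes>\<^bsub>G1\<^esub> y) = Psi x \<otimes>\<^bsub>TG\<^esub> Psi y"
      unfolding Psi_def TG_def mult_DirProd a b by simp
  qed
  have onto: "Psi ` carrier G1 = carrier TG"
  proof (intro equalityI subsetI)
    fix h assume "h \<in> Psi ` carrier G1" then show "h \<in> carrier TG"
      using hom by (auto simp: hom_def)
  next
    fix ht assume ht: "ht \<in> carrier TG"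
    obtain h t where htd: "ht = (h, t)" by (cases ht)
    have h: "h \<in> carrier (Zpow N)" and t: "t \<in> {0..<2}"
      using ht unfolding htd TG_def carrier_DirProd carrier_integer_mod_group by auto
    define Hf where "Hf k = (if k = e0 then t else if k \<in> NT' then h (inv_into {..<N} en k) + sh k * sh e0 * t else 0)" for k
    have Hz: "Hf k = 0" if "k \<ge> length es" for k
      using NT_lt[of k] that e0E unfolding Hf_def NT'_def by auto
    obtain f where f: "f \<in> carrier G1" "F f = Hf" using F_ex[of Hf] Hz by blast
    have phiH: "phi e Hf = Hf e" if "e < length es" for e
    proof (rule S)
      fix k assume "k \<in> TE" then show "Hf k = 0" using e0(1) unfolding Hf_def NT'_def NT_def by auto
    next
      show "e < length es" using that .
    qed
    have He0: "Hf e0 = t" unfolding Hf_def by simp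
    have "A f = h"
    proof
      fix i show "A f i = h i"
      proof (cases "i < N")
        case True
        have eNT: "en i \<in> NT'" using enNT[OF True] .
        then have ne: "en i \<noteq> e0" "en i \<in> NT" unfolding NT'_def by auto
        have "A f i = Hf (en i) - sh (en i) * sh e0 * Hf e0"
          using A_app[OF True] f(2) phiH[OF NT_lt[OF ne(2)]] phiH[OF e0E] by simp
        also have "\<dots> = h (inv_into {..<N} en (en i))" using eNT ne unfolding Hf_def by simp
        also have "\<dots> = h i" using en True by (simp add: bij_betw_def inv_into_f_f)
        finally show ?thesis .
      next
        case False
        then have "h i = undefined" using h unfolding carrier_Zpow by (auto simp: PiE_def extensional_def)
        then show ?thesis using False by (simp add: A_def)
      qed
    qed
    moreover have "B f = t" unfolding B_def f(2) phiH[OF e0E] He0 using t by simp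
    ultimately have "Psi f = ht" unfolding Psi_def htd by simp
    then show "ht \<in> Psi ` carrier G1" using f(1) by blast
  qed
  have oneTG: "\<one>\<^bsub>TG\<^esub> = ((\<lambda>i\<in>{..<N}. 0), 0)" unfolding TG_def by (simp add: one_Zpow)
  define rho where "rho k = (\<Sum>u\<in>es ! k. (if u = r then 1 else 0::int))" for k
  have phirho: "phi e rho = 2 * sh e" if "e < length es" for e
    using K1phi[of rho "\<lambda>u. if u = r then 1 else 0", OF _ that] sgs_2sh[OF that] unfolding rho_def by simp
  have ker: "Psi f = \<one>\<^bsub>TG\<^esub> \<longleftrightarrow> (\<exists>y. \<forall>k<length es. F f k = (\<Sum>u\<in>es ! k. y u))" for f
  proof
    assume eq: "Psi f = \<one>\<^bsub>TG\<^esub>"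
    then have eqA: "A f = (\<lambda>i\<in>{..<N}. 0)" and eqB: "B f = 0" unfolding oneTG Psi_def by auto
    define m where "m = phi e0 (F f) div 2"
    have pm: "phi e0 (F f) = 2 * m" using div_mult_mod_eq[of "phi e0 (F f)" 2] eqB unfolding B_def m_def by linarith
    have pi: "phi (en i) (F f) = sh (en i) * sh e0 * phi e0 (F f)" if "i < N" for i
    proof -
      have "A f i = 0" using eqA that by simp
      then show ?thesis using A_app[OF that] by simp
    qed
    define c where "c = m * sh e0"
    define g where "g k = 1 * F f k + (- c) * rho k" for k
    have g_phi: "phi e g = phi e (F f) - c * (2 * sh e)" if "e < length es" for e
      using phirho[OF that] unfolding g_def[abs_def] phi_lin by simp
    have nt: "phi e g = 0" if "e \<in> NT" for e
    proof (cases "e = e0")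
      case True
      have "phi e g = 2 * m - m * (2 * (sh e0 * sh e0))"
        using g_phi[OF e0E] pm True unfolding c_def by (simp add: algebra_simps)
      then show ?thesis using s0 by simp
    next
      case False
      then have "e \<in> NT'" using that unfolding NT'_def by simp
      then have "e \<in> en ` {..<N}" using en by (simp add: bij_betw_def)
      then obtain i where i: "i < N" "e = en i" by blast
      have "phi e g = sh e * sh e0 * (2 * m) - m * sh e0 * (2 * sh e)"
        using g_phi[OF NT_lt[OF that]] pi[OF i(1)] i(2) pm unfolding c_def by simp
      then show ?thesis by (simp add: algebra_simps)
    qed
    have gk: "g k = (\<Sum>u\<in>es ! k. xp g u)" if "k < length es" for k using K2[of g, OF nt that] .
    have Fk: "F f k = (\<Sum>u\<in>es ! k. xp g u + c * (if u = r then 1 else 0))" if "k < length es" for k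
    proof -
      have "F f k = g k + c * rho k" unfolding g_def by simp
      also have "\<dots> = (\<Sum>u\<in>es ! k. xp g u + c * (if u = r then 1 else 0))"
        unfolding gk[OF that] rho_def by (simp add: sum.distrib sum_distrib_left)
      finally show ?thesis .
    qed
    show "\<exists>y. \<forall>k<length es. F f k = (\<Sum>u\<in>es ! k. y u)"
      by (intro exI[of _ "\<lambda>u. xp g u + c * (if u = r then 1 else 0)"] allI impI Fk)
  next
    assume "\<exists>y. \<forall>k<length es. F f k = (\<Sum>u\<in>es ! k. y u)"
    then obtain y where y: "\<And>k. k < length es \<Longrightarrow> F f k = (\<Sum>u\<in>es ! k. y u)" by blast
    have ph: "phi e (F f) = y r * (2 * sh e)" if "e < length es" for e
      using K1phi[OF y that] sgs_2sh[OF that] by simp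
    have "A f = (\<lambda>i\<in>{..<N}. 0)"
      unfolding A_def
    proof (intro restrict_ext)
      fix i assume i: "i \<in> {..<N}"
      then have ei: "en i < length es" using enNT NT_lt unfolding NT'_def by auto
      have "phi (en i) (F f) - sh (en i) * sh e0 * phi e0 (F f)
            = y r * 2 * sh (en i) * (1 - sh e0 * sh e0)"
        using ph[OF ei] ph[OF e0E] by (simp add: algebra_simps)
      then show "phi (en i) (F f) - sh (en i) * sh e0 * phi e0 (F f) = 0" using s0 by simp
    qed
    moreover have "B f = 0" unfolding B_def ph[OF e0E] by simp
    ultimately show "Psi f = \<one>\<^bsub>TG\<^esub>" unfolding oneTG Psi_def by simp
  qed
  show ?thesis using main_iso[OF gTG hom onto ker] unfolding N_def TG_def .
qed

end

theorem corollary3p2: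
  fixes V :: "'v set" and es :: "'v set list"
  assumes "simple_graph V es" and "connected_graph V es"
  shows "(bipartite V es \<longrightarrow>
            homology V es 1 (card V - 1) \<cong> Zpow (length es + 1 - card V))
       \<and> (has_odd_cycle V es \<longrightarrow>
            homology V es 1 (card V - 1) \<cong> Zpow (length es + 1 - card V - 1) \<times>\<times> integer_mod_group 2)"
proof -
  interpret g: gr V es using assms by (rule gr.intro)
  have cNT: "card g.NT = length es + 1 - card V" by (rule g.card_NT)
  show ?thesis
  proof (intro conjI impI)
    assume "bipartite V es"
    then have z: "\<And>e. e < length es \<Longrightarrow> g.sgs e = 0" using g.bip_sgs by blast
    show "homology V es 1 (card V - 1) \<cong> Zpow (length es + 1 - card V)"
      unfolding cNT[symmetric] by (rule g.bip_iso[OF z])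
  next
    assume "has_odd_cycle V es"
    then obtain e where e: "e < length es" "g.sgs e \<noteq> 0" using g.odd_sgs by blast
    have "e \<notin> g.TE" using g.sgs_TE e(2) by blast
    then have eNT: "e \<in> g.NT" unfolding g.NT_def using e(1) by simp
    show "homology V es 1 (card V - 1) \<cong> Zpow (length es + 1 - card V - 1) \<times>\<times> integer_mod_group 2"
      unfolding cNT[symmetric] by (rule g.odd_iso[OF eNT e(2)])
  qed
qed

end
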